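(* Let $F_a(x,u,\partial u,\ldots,\partial^Nu)=0$, $a=1,\ldots,M$, be a system of differential equations for $u=(u^1,\ldots,u^m)$ with solution space $\mathcal{E}$, admitting an adjoint-symmetry $Q^a(x,u,\partial u,\ldots,\partial^su)$, i.e. $(\delta^*_QF)_\alpha|_{\mathcal{E}}=0$, and let $P^\alpha(x,u,\partial u,\ldots,\partial^ru)$ be the characteristic of a local symmetry, i.e. $(\delta_PF)_a|_{\mathcal{E}}=0$. Let $L=v^aF_a$ with auxiliary variables $v^a$, and let $\Phi^i(P;L)$ be the Noether conserved current of the extended Euler–Lagrange system $F_a=0$, $(\delta^*_vF)_\alpha=0$ associated with the extension of the symmetry, defined through $\delta_P L = P^\alpha E_{u^\alpha}(L)+D_i\Phi^i(P;L)$ (Fréchet derivative in $u$ only, explicitly $\Phi^i(P;L)=\Psi^i(P,v;F)$). Then $\Phi^i(P;L)|_{v=Q}$ is equivalent to (indeed equal to) the conserved current $\Psi^i(P,Q;F)$ given by the adjoint-symmetry/symmetry formula $$Q^a(\delta_PF)_a-P^\alpha(\delta^*_QF)_\alpha=D_i\Psi^i(P,Q;F),$$ and $D_i\Psi^i(P,Q;F)|_{\mathcal{E}}=0$.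
   Context: Independent variables $x=(x^1,\ldots,x^n)$, dependent variables $u=(u^1,\ldots,u^m)$; summation over repeated indices. Jet coordinates $u^\alpha_I$ for multi-indices $I$; $D_i$ is the total derivative, $D_I=D_{i_1}\cdots D_{i_k}$, $|I|=k$. "On $\mathcal{E}$" means evaluated using the system and its differential consequences. Fréchet derivative $(\delta_wF)_a=\sum_I(D_Iw^\alpha)\partial F_a/\partial u^\alpha_I$; adjoint $(\delta^*_vF)_\alpha=\sum_I(-1)^{|I|}D_I(v^a\partial F_a/\partial u^\alpha_I)$; Euler operator $E_{u^\alpha}(f)=\sum_I(-1)^{|I|}D_I(\partial f/\partial u^\alpha_I)$. The vector $$\Psi^i(w,v;F)=\sum_{k\ge1}\sum_{|J|+|K|=k-1}(-1)^{|K|}(D_Jw^\alpha)\,D_K\Big(v^a\frac{\partial F_a}{\partial u^\alpha_{JKi}}\Big).$$ A symmetry generator $\xi^i\partial_{x^i}+\eta^\alpha\partial_{u^\alpha}$ has characteristic $P^\alpha=\eta^\alpha-\xi^iu^\alpha_i$. In the paper's terminology a system admitting an adjoint-symmetry is called "nonlinearly self-adjoint" in the general sense. *)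

theory Defs
  imports "HOL-Analysis.Analysis" "HOL-Library.Multiset"
begin

text \<open>Coordinates: independent variables x^i, jet coordinates u^alpha_I of the
dependent variables (symmetric multi-index I represented as a multiset of directions), and
jet coordinates v^a_I of the auxiliary variables v^a.\<close>

datatype jc = X nat | U nat "nat multiset" | V nat "nat multiset"

type_synonym jet = "jc \<Rightarrow> real"
type_synonym dfun = "jet \<Rightarrow> real"

definition deps :: "dfun \<Rightarrow> jc set" where
  "deps f = {c. \<exists>p t. f (p(c := t)) \<noteq> f p}"

definition pd :: "dfun \<Rightarrow> jc \<Rightarrow> dfun" where
  "pd f c p = deriv (\<lambda>t. f (p(c := t))) (p c)"

definition smooth_dfun :: "dfun \<Rightarrow> bool" where
  "smooth_dfun f \<longleftrightarrow> finite (deps f) \<and>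
     (\<forall>cs. continuous_on UNIV (foldr (\<lambda>c g. pd g c) cs f) \<and>
        (\<forall>c p. (\<lambda>t. foldr (\<lambda>c g. pd g c) cs f (p(c := t))) differentiable (at (p c))))"

fun ucoord :: "nat \<Rightarrow> nat \<Rightarrow> jc \<Rightarrow> bool" where
  "ucoord n m (X i) \<longleftrightarrow> i < n"
| "ucoord n m (U \<alpha> I) \<longleftrightarrow> \<alpha> < m \<and> set_mset I \<subseteq> {..<n}"
| "ucoord n m (V a I) \<longleftrightarrow> False"

fun jorder :: "jc \<Rightarrow> nat" where
  "jorder (X i) = 0"
| "jorder (U \<alpha> I) = size I"
| "jorder (V a I) = size I"

definition Dt :: "nat \<Rightarrow> dfun \<Rightarrow> dfun" where
  "Dt i f p = pd f (X i) p +
     (\<Sum>c\<in>deps f. (case c of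
         U \<alpha> I \<Rightarrow> p (U \<alpha> (add_mset i I)) * pd f c p
       | V a I \<Rightarrow> p (V a (add_mset i I)) * pd f c p
       | X j \<Rightarrow> 0))"

definition Dl :: "nat list \<Rightarrow> dfun \<Rightarrow> dfun" where
  "Dl I f = foldr Dt I f"

definition mis :: "nat \<Rightarrow> nat \<Rightarrow> nat list set" where
  "mis n k = {I. set I \<subseteq> {..<n} \<and> length I = k}"

text \<open>dF/du^alpha_I for an ordered multi-index I: the coordinate partial derivative divided by
the number of distinct orderings of I (symmetric convention, so that sums over ordered
multi-indices reproduce the usual formulas).\<close>
definition dU :: "dfun \<Rightarrow> nat \<Rightarrow> nat list \<Rightarrow> dfun" where
  "dU f \<alpha> I p = pd f (U \<alpha> (mset I)) p / real (card {J. mset J = mset I})"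

text \<open>Frechet derivative (delta_w F)_a; N bounds the differential order of F.\<close>
definition frechet :: "nat \<Rightarrow> nat \<Rightarrow> nat \<Rightarrow> (nat \<Rightarrow> dfun) \<Rightarrow> (nat \<Rightarrow> dfun) \<Rightarrow> nat \<Rightarrow> dfun" where
  "frechet n m N w F a p =
     (\<Sum>k\<le>N. \<Sum>I\<in>mis n k. \<Sum>\<alpha><m. Dl I (w \<alpha>) p * dU (F a) \<alpha> I p)"

definition adjoint :: "nat \<Rightarrow> nat \<Rightarrow> nat \<Rightarrow> (nat \<Rightarrow> dfun) \<Rightarrow> (nat \<Rightarrow> dfun) \<Rightarrow> nat \<Rightarrow> dfun" where
  "adjoint n M N v F \<alpha> p =
     (\<Sum>k\<le>N. \<Sum>I\<in>mis n k. (-1) ^ k * Dl I (\<lambda>q. \<Sum>a<M. v a q * dU (F a) \<alpha> I q) p)"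

definition Psi :: "nat \<Rightarrow> nat \<Rightarrow> nat \<Rightarrow> nat \<Rightarrow> (nat \<Rightarrow> dfun) \<Rightarrow> (nat \<Rightarrow> dfun) \<Rightarrow> (nat \<Rightarrow> dfun)
                   \<Rightarrow> nat \<Rightarrow> dfun" where
  "Psi n m M N w v F i p =
     (\<Sum>k\<in>{1..N}. \<Sum>JK\<in>{(J, K). set J \<subseteq> {..<n} \<and> set K \<subseteq> {..<n} \<and> length J + length K = k - 1}.
        \<Sum>\<alpha><m. (-1) ^ length (snd JK) * Dl (fst JK) (w \<alpha>) p *
            Dl (snd JK) (\<lambda>q. \<Sum>a<M. v a q * dU (F a) \<alpha> (fst JK @ snd JK @ [i]) q) p)"

definition vvar :: "nat \<Rightarrow> dfun" where
  "vvar a p = p (V a {#})"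

text \<open>Noether current Phi^i(P;L) of L = v^a F_a (explicitly Psi^i(P,v;F)).\<close>
definition Phi :: "nat \<Rightarrow> nat \<Rightarrow> nat \<Rightarrow> nat \<Rightarrow> (nat \<Rightarrow> dfun) \<Rightarrow> (nat \<Rightarrow> dfun) \<Rightarrow> nat \<Rightarrow> dfun" where
  "Phi n m M N P F i = Psi n m M N P vvar F i"

definition subst_v :: "(nat \<Rightarrow> dfun) \<Rightarrow> dfun \<Rightarrow> dfun" where
  "subst_v Q f p = f (\<lambda>c. case c of
       V a I \<Rightarrow> Dl (sorted_list_of_multiset I) (Q a) p
     | _ \<Rightarrow> p c)"

definition onE :: "nat \<Rightarrow> nat \<Rightarrow> (nat \<Rightarrow> dfun) \<Rightarrow> dfun \<Rightarrow> bool" where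
  "onE n M F g \<longleftrightarrow>
     (\<forall>p. (\<forall>a<M. \<forall>I. set I \<subseteq> {..<n} \<longrightarrow> Dl I (F a) p = 0) \<longrightarrow> g p = 0)"

end

theory Submission
  imports Defs
begin



definition pds :: "jc list \<Rightarrow> dfun \<Rightarrow> dfun" where
  "pds cs f = foldr (\<lambda>c g. pd g c) cs f"

lemma pds_simps[simp]: "pds [] f = f" "pds (c#cs) f = pd (pds cs f) c"
  by (simp_all add: pds_def)

lemma pds_append: "pds (cs @ ds) f = pds cs (pds ds f)"
  by (simp add: pds_def)

definition dif :: "dfun \<Rightarrow> bool" where
  "dif f \<longleftrightarrow> (\<forall>c p. (\<lambda>t. f (p(c := t))) differentiable (at (p c)))"

lemma sm_iff: "smooth_dfun f \<longleftrightarrow> finite (deps f) \<and> (\<forall>cs. continuous_on UNIV (pds cs f) \<and> dif (pds cs f))"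
  unfolding smooth_dfun_def pds_def dif_def by blast

lemma not_deps: "c \<notin> deps f \<Longrightarrow> f (p(c := t)) = f p"
  unfolding deps_def by blast

lemma pd_nodep: "c \<notin> deps f \<Longrightarrow> pd f c p = 0"
  unfolding pd_def using not_deps[of c f] by simp

lemma deps_pd: "deps (pd f c) \<subseteq> deps f"
proof
  fix d assume d: "d \<in> deps (pd f c)"
  show "d \<in> deps f"
  proof (rule ccontr)
    assume nd: "d \<notin> deps f"
    have "pd f c (p(d := s)) = pd f c p" for p s
    proof (cases "d = c")
      case True
      then show ?thesis using pd_nodep[OF nd[unfolded True]] True by simp
    next
      case False
      have "(\<lambda>t. f (p(d := s, c := t))) = (\<lambda>t. f (p(c := t)))"
        using not_deps[OF nd, of "p(c:=_)" s] False by (simp add: fun_upd_twist)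
      then show ?thesis using False unfolding pd_def by simp
    qed
    then show False using d unfolding deps_def by auto
  qed
qed

lemma dif_deriv:
  assumes "dif f"
  shows "((\<lambda>x. f (p(c := x))) has_real_derivative pd f c (p(c := t))) (at t)"
proof -
  have "(\<lambda>x. f ((p(c:=t))(c := x))) differentiable (at ((p(c:=t)) c))"
    using assms unfolding dif_def by blast
  then have "(\<lambda>x. f (p(c := x))) differentiable (at t)" by simp
  then have "((\<lambda>x. f (p(c := x))) has_real_derivative deriv (\<lambda>x. f (p(c := x))) t) (at t)"
    using DERIV_deriv_iff_real_differentiable by blast
  moreover have "pd f c (p(c := t)) = deriv (\<lambda>x. f (p(c := x))) t"
    unfolding pd_def by simp
  ultimately show ?thesis by simp
qed

lemma deriv_to_pd:
  assumes "\<And>t. ((\<lambda>x. f (p(c := x))) has_real_derivative D t) (at t)"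
  shows "pd f c p = D (p c)"
proof -
  have "(\<lambda>x. f (p(c := x))) = (\<lambda>x. f ((p(c:=p c))(c := x)))" by simp
  show ?thesis unfolding pd_def using DERIV_imp_deriv[OF assms[of "p c"]] by simp
qed

lemma deriv_dif:
  assumes "\<And>p c t. ((\<lambda>x. f (p(c := x))) has_real_derivative D p c t) (at t)"
  shows "dif f"
  unfolding dif_def using assms real_differentiable_def by blast

definition SP :: "(dfun \<times> dfun) list \<Rightarrow> dfun" where
  "SP L p = sum_list (map (\<lambda>(f,g). f p * g p) L)"

definition dL :: "jc \<Rightarrow> (dfun \<times> dfun) list \<Rightarrow> (dfun \<times> dfun) list" where
  "dL c L = concat (map (\<lambda>(f,g). [(pd f c, g), (f, pd g c)]) L)"

lemma SP_simps[simp]: "SP [] = (\<lambda>p. 0)" "SP ((f,g)#L) = (\<lambda>p. f p * g p + SP L p)"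
  by (auto simp: SP_def)

lemma SP_deriv:
  assumes "\<forall>(f,g)\<in>set L. dif f \<and> dif g"
  shows "((\<lambda>x. SP L (p(c := x))) has_real_derivative SP (dL c L) (p(c := t))) (at t)"
  using assms
proof (induction L)
  case Nil then show ?case by (simp add: dL_def)
next
  case (Cons a L)
  obtain f g where a: "a = (f,g)" by fastforce
  have "dL c (a#L) = (pd f c, g) # (f, pd g c) # dL c L" by (simp add: a dL_def)
  moreover have "((\<lambda>x. f (p(c := x)) * g (p(c := x)) + SP L (p(c := x))) has_real_derivative
     (pd f c (p(c:=t)) * g (p(c:=t)) + f (p(c:=t)) * pd g c (p(c:=t)) + SP (dL c L) (p(c := t)))) (at t)"
  proof -
    have df: "((\<lambda>x. f (p(c := x))) has_real_derivative pd f c (p(c := t))) (at t)"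
      using Cons.prems a dif_deriv by auto
    have dg: "((\<lambda>x. g (p(c := x))) has_real_derivative pd g c (p(c := t))) (at t)"
      using Cons.prems a dif_deriv by auto
    have "\<forall>(f,g)\<in>set L. dif f \<and> dif g" using Cons.prems by auto
    from Cons.IH[OF this]
    have dr: "((\<lambda>x. SP L (p(c := x))) has_real_derivative SP (dL c L) (p(c := t))) (at t)" .
    have "t = (p(c:=t)) c" by simp
    show ?thesis using DERIV_add[OF DERIV_mult[OF df dg] dr] by (simp only: add_ac mult_ac)
  qed
  moreover have "SP (a#L) = (\<lambda>q. f q * g q + SP L q)" by (simp add: a)
  moreover have "SP (dL c (a#L)) q = pd f c q * g q + f q * pd g c q + SP (dL c L) q" for q
    by (simp add: a dL_def)
  ultimately show ?case by (simp only:)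
qed

lemma SP_pd:
  assumes "\<forall>(f,g)\<in>set L. dif f \<and> dif g"
  shows "pd (SP L) c = SP (dL c L)"
proof
  fix p
  show "pd (SP L) c p = SP (dL c L) p"
    using deriv_to_pd[of "SP L" p c "\<lambda>t. SP (dL c L) (p(c := t))", OF SP_deriv[OF assms]] by simp
qed

lemma SP_dif:
  assumes "\<forall>(f,g)\<in>set L. dif f \<and> dif g"
  shows "dif (SP L)"
  by (rule deriv_dif[OF SP_deriv[OF assms]])

lemma SP_cont:
  assumes "\<forall>(f,g)\<in>set L. continuous_on UNIV f \<and> continuous_on UNIV g"
  shows "continuous_on UNIV (SP L)"
  using assms
proof (induction L)
  case Nil then show ?case by (simp add: continuous_on_const)
next
  case (Cons a L)
  obtain f g where a: "a = (f,g)" by fastforce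
  show ?case using Cons by (auto simp: a intro!: continuous_intros)
qed

lemma deps_comb: "deps (\<lambda>p. h (f p) (g p)) \<subseteq> deps f \<union> deps g"
proof
  fix c assume c: "c \<in> deps (\<lambda>p. h (f p) (g p))"
  show "c \<in> deps f \<union> deps g"
  proof (rule ccontr)
    assume "c \<notin> deps f \<union> deps g"
    then have "h (f (p(c:=t))) (g (p(c:=t))) = h (f p) (g p)" for p t using not_deps[of c f] not_deps[of c g] by simp
    then show False using c unfolding deps_def by auto
  qed
qed
lemma deps_add: "deps (\<lambda>p. f p + g p) \<subseteq> deps f \<union> deps g"
  using deps_comb[of "(+)"] .
lemma deps_mult: "deps (\<lambda>p. f p * g p) \<subseteq> deps f \<union> deps g"
  using deps_comb[of "(*)"] .
lemma deps_const[simp]: "deps (\<lambda>p. k) = {}"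
  unfolding deps_def by auto

lemma SP_deps: "deps (SP L) \<subseteq> (\<Union>(f,g)\<in>set L. deps f \<union> deps g)"
proof (induction L)
  case Nil then show ?case by simp
next
  case (Cons a L)
  obtain f g where a: "a = (f,g)" by fastforce
  show ?case using Cons deps_add[of "\<lambda>p. f p * g p" "SP L"] deps_mult[of f g] by (auto simp: a)
qed

lemma sm_dif: "smooth_dfun f \<Longrightarrow> dif f"
  unfolding sm_iff using pds_simps(1) by metis
lemma sm_cont: "smooth_dfun f \<Longrightarrow> continuous_on UNIV f"
  unfolding sm_iff using pds_simps(1) by metis
lemma sm_fin: "smooth_dfun f \<Longrightarrow> finite (deps f)"
  unfolding sm_iff by blast

lemma sm_pd: "smooth_dfun f \<Longrightarrow> smooth_dfun (pd f c)"
  unfolding sm_iff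
  using deps_pd[of f c] finite_subset by (metis pds_append pds_simps)

lemma dL_sm:
  assumes "\<forall>(f,g)\<in>set L. smooth_dfun f \<and> smooth_dfun g"
  shows "\<forall>(f,g)\<in>set (dL c L). smooth_dfun f \<and> smooth_dfun g"
  using assms
proof (induction L)
  case Nil then show ?case by (simp add: dL_def)
next
  case (Cons a L)
  obtain f g where a: "a = (f,g)" by fastforce
  have "dL c (a#L) = (pd f c, g) # (f, pd g c) # dL c L" by (simp add: a dL_def)
  moreover have "smooth_dfun f" "smooth_dfun g" using Cons.prems a by auto
  moreover have "\<forall>(f,g)\<in>set (dL c L). smooth_dfun f \<and> smooth_dfun g"
    using Cons by simp
  ultimately show ?case using sm_pd by simp
qed

lemma SP_sm_basic:
  assumes "\<forall>(f,g)\<in>set L. smooth_dfun f \<and> smooth_dfun g"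
  shows "continuous_on UNIV (SP L) \<and> dif (SP L)"
proof -
  have "\<forall>(f,g)\<in>set L. continuous_on UNIV f \<and> continuous_on UNIV g"
    using assms sm_cont by auto
  moreover have "\<forall>(f,g)\<in>set L. dif f \<and> dif g"
    using assms sm_dif by auto
  ultimately show ?thesis using SP_cont SP_dif by simp
qed

lemma sm_SP:
  assumes "\<forall>(f,g)\<in>set L. smooth_dfun f \<and> smooth_dfun g"
  shows "smooth_dfun (SP L)"
proof -
  have ex: "\<exists>L'. (\<forall>(f,g)\<in>set L'. smooth_dfun f \<and> smooth_dfun g) \<and> pds cs (SP L) = SP L'" for cs
  proof (induction cs)
    case Nil then show ?case using assms by auto
  next
    case (Cons c cs)
    then obtain L' where L': "\<forall>(f,g)\<in>set L'. smooth_dfun f \<and> smooth_dfun g" "pds cs (SP L) = SP L'"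
      by blast
    have d: "\<forall>(f,g)\<in>set L'. dif f \<and> dif g" using L'(1) sm_dif by auto
    have "pds (c#cs) (SP L) = SP (dL c L')" using SP_pd[OF d] L'(2) by simp
    then show ?case using dL_sm[OF L'(1)] by blast
  qed
  have fin: "finite (deps (SP L))"
  proof (rule finite_subset[OF SP_deps])
    show "finite (\<Union>(f,g)\<in>set L. deps f \<union> deps g)"
      using assms sm_fin by (intro finite_UN_I) auto
  qed
  have "continuous_on UNIV (pds cs (SP L)) \<and> dif (pds cs (SP L))" for cs
  proof -
    obtain L' where "\<forall>(f,g)\<in>set L'. smooth_dfun f \<and> smooth_dfun g" "pds cs (SP L) = SP L'"
      using ex by blast
    then show ?thesis using SP_sm_basic by simp
  qed
  then show ?thesis unfolding sm_iff using fin by simp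
qed

lemma sm_const: "smooth_dfun (\<lambda>p. k)"
proof -
  have pc: "pd (\<lambda>p. k') c = (\<lambda>p. 0)" for k' :: real and c
    unfolding pd_def by simp
  have e: "pds cs (\<lambda>p. k) = (\<lambda>p. if cs = [] then k else 0)" for cs
  proof (induction cs)
    case (Cons c cs)
    then show ?case by (cases "cs = []") (simp_all add: pc)
  qed simp
  have d: "dif (\<lambda>p. k')" for k' :: real unfolding dif_def by simp
  show ?thesis unfolding sm_iff
  proof (intro conjI allI)
    fix cs
    show "continuous_on UNIV (pds cs (\<lambda>p. k))" unfolding e by (cases "cs = []") simp_all
    show "dif (pds cs (\<lambda>p. k))" unfolding e by (cases "cs = []") (simp_all add: d)
  qed simp
qed

lemma sm_mult: "smooth_dfun f \<Longrightarrow> smooth_dfun g \<Longrightarrow> smooth_dfun (\<lambda>p. f p * g p)"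
  using sm_SP[of "[(f,g)]"] by simp

lemma sm_add: "smooth_dfun f \<Longrightarrow> smooth_dfun g \<Longrightarrow> smooth_dfun (\<lambda>p. f p + g p)"
  using sm_SP[of "[(f,\<lambda>p. 1),(g,\<lambda>p. 1)]"] sm_const by simp

lemma sm_cmult: "smooth_dfun f \<Longrightarrow> smooth_dfun (\<lambda>p. k * f p)"
  by (rule sm_mult[OF sm_const])

lemma sm_sum: "finite A \<Longrightarrow> (\<And>x. x \<in> A \<Longrightarrow> smooth_dfun (f x)) \<Longrightarrow> smooth_dfun (\<lambda>p. \<Sum>x\<in>A. f x p)"
proof (induction A rule: finite_induct)
  case empty
  then show ?case using sm_const[of 0] by simp
next
  case (insert a A)
  have "smooth_dfun (\<lambda>p. f a p + (\<Sum>x\<in>A. f x p))"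
    using insert by (intro sm_add) auto
  then show ?case using insert by simp
qed

lemma sm_coord: "smooth_dfun (\<lambda>p. p e)"
proof -
  have deps: "deps (\<lambda>p. p e) \<subseteq> {e}" unfolding deps_def by auto
  have "pd (\<lambda>p. p e) c = (\<lambda>p. if c = e then 1 else 0)" for c
  proof
    fix p
    show "pd (\<lambda>p. p e) c p = (if c = e then 1 else 0)"
    proof (cases "c = e")
      case True
      then show ?thesis unfolding pd_def by simp
    next
      case False
      then show ?thesis using pd_nodep[of c "\<lambda>p. p e"] deps by auto
    qed
  qed
  then have P1: "pds (cs @ [c]) (\<lambda>p. p e) = pds cs (\<lambda>p. if c = e then 1 else 0)" for c cs
    by (simp add: pds_append)
  have P2: "dif (\<lambda>p. p e)"
  proof -
    have "((\<lambda>x. (p(c := x)) e) has_real_derivative (if c = e then 1 else 0)) (at t)" for p c t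
      by (cases "c = e") auto
    then show ?thesis by (rule deriv_dif)
  qed
  have P3: "continuous_on UNIV (\<lambda>p. p e)" by simp
  have "continuous_on UNIV (pds cs (\<lambda>p. p e)) \<and> dif (pds cs (\<lambda>p. p e))" for cs
  proof (cases cs rule: rev_exhaust)
    case Nil
    then show ?thesis using P2 P3 by simp
  next
    case (snoc ys c)
    have "continuous_on UNIV (pds ys (\<lambda>p. if c = e then 1 else 0)) \<and> dif (pds ys (\<lambda>p. if c = e then 1 else 0))"
      using sm_const[of "if c = e then 1 else 0", unfolded sm_iff] by blast
    then show ?thesis using P1[of ys c] snoc by simp
  qed
  then show ?thesis unfolding sm_iff using deps finite_subset[OF deps] by simp
qed




definition sh :: "nat \<Rightarrow> jc \<Rightarrow> jc" where
  "sh i c = (case c of U \<alpha> I \<Rightarrow> U \<alpha> (add_mset i I) | V a I \<Rightarrow> V a (add_mset i I) | X j \<Rightarrow> X j)"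

fun isX :: "jc \<Rightarrow> bool" where
  "isX (X j) = True" | "isX (U \<alpha> I) = False" | "isX (V a I) = False"

definition wt :: "nat \<Rightarrow> jet \<Rightarrow> jc \<Rightarrow> real" where
  "wt i p c = (if isX c then 0 else p (sh i c))"

lemma Dt_summand: "(case c of
         U \<alpha> I \<Rightarrow> p (U \<alpha> (add_mset i I)) * pd f c p
       | V a I \<Rightarrow> p (V a (add_mset i I)) * pd f c p
       | X j \<Rightarrow> 0) = wt i p c * pd f c p"
  by (cases c) (simp_all add: wt_def sh_def)

lemma Dt_alt:
  assumes "finite S" "deps f \<subseteq> S"
  shows "Dt i f p = pd f (X i) p + (\<Sum>c\<in>S. wt i p c * pd f c p)"
proof -
  have "(\<Sum>c\<in>deps f. wt i p c * pd f c p) = (\<Sum>c\<in>S. wt i p c * pd f c p)"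
    by (rule sum.mono_neutral_left) (use assms pd_nodep in auto)
  then show ?thesis unfolding Dt_def Dt_summand by simp
qed

lemma Dt_fun: "finite (deps f) \<Longrightarrow> Dt i f = (\<lambda>p. pd f (X i) p + (\<Sum>c\<in>deps f. wt i p c * pd f c p))"
  using Dt_alt by blast

lemma sm_wt: "smooth_dfun (\<lambda>p. wt i p c)"
proof (cases "isX c")
  case True
  then show ?thesis using sm_const[of 0] by (simp add: wt_def)
next
  case False
  then show ?thesis using sm_coord[of "sh i c"] by (simp add: wt_def)
qed

lemma sm_Dt: "smooth_dfun f \<Longrightarrow> smooth_dfun (Dt i f)"
  apply (subst Dt_fun, erule sm_fin)
  apply (rule sm_add)
   apply (erule sm_pd)
  apply (rule sm_sum)
   apply (erule sm_fin)
  apply (rule sm_mult[OF sm_wt])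
  apply (erule sm_pd)
  done

lemma sm_Dl: "smooth_dfun f \<Longrightarrow> smooth_dfun (Dl I f)"
  by (induction I) (simp_all add: Dl_def sm_Dt)

lemma Dl_Cons: "Dl (i # I) f = Dt i (Dl I f)"
  by (simp add: Dl_def)
lemma Dl_Nil[simp]: "Dl [] f = f"
  by (simp add: Dl_def)

lemma pd_add: "dif f \<Longrightarrow> dif g \<Longrightarrow> pd (\<lambda>p. f p + g p) c p = pd f c p + pd g c p"
  using deriv_to_pd[of "\<lambda>p. f p + g p" p c "\<lambda>t. pd f c (p(c:=t)) + pd g c (p(c:=t))"]
    DERIV_add[OF dif_deriv dif_deriv] by simp

lemma pd_mult:
  assumes "dif f" "dif g"
  shows "pd (\<lambda>p. f p * g p) c p = pd f c p * g p + f p * pd g c p"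
proof -
  have "pd (\<lambda>p. f p * g p) c p = f (p(c:=p c)) * pd g c (p(c:=p c)) + pd f c (p(c:=p c)) * g (p(c:=p c))"
    by (rule deriv_to_pd[of "\<lambda>p. f p * g p" p c "\<lambda>t. f (p(c:=t)) * pd g c (p(c:=t)) + pd f c (p(c:=t)) * g (p(c:=t))"])
      (rule DERIV_mult'[OF dif_deriv[OF assms(1)] dif_deriv[OF assms(2)]])
  then show ?thesis by simp
qed

lemma pd_const: "pd (\<lambda>p. k) c p = 0"
  unfolding pd_def by simp

lemma pd_coord: "pd (\<lambda>p. p e) c p = (if c = e then 1 else 0)"
proof (cases "c = e")
  case True
  then show ?thesis unfolding pd_def by simp
next
  case False
  have "deps (\<lambda>p. p e) \<subseteq> {e}" unfolding deps_def by auto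
  then show ?thesis using pd_nodep[of c "\<lambda>p. p e"] False by auto
qed

lemma Dt_add:
  assumes "smooth_dfun f" "smooth_dfun g"
  shows "Dt i (\<lambda>p. f p + g p) p = Dt i f p + Dt i g p"
proof -
  let ?S = "deps f \<union> deps g"
  have fin: "finite ?S" using assms sm_fin by auto
  have "Dt i (\<lambda>p. f p + g p) p = pd (\<lambda>p. f p + g p) (X i) p + (\<Sum>c\<in>?S. wt i p c * pd (\<lambda>p. f p + g p) c p)"
    by (rule Dt_alt[OF fin deps_add])
  also have "\<dots> = (pd f (X i) p + (\<Sum>c\<in>?S. wt i p c * pd f c p)) + (pd g (X i) p + (\<Sum>c\<in>?S. wt i p c * pd g c p))"
    using pd_add[OF sm_dif[OF assms(1)] sm_dif[OF assms(2)]]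
    by (simp add: sum.distrib distrib_left)
  also have "\<dots> = Dt i f p + Dt i g p"
    using Dt_alt[OF fin, of f] Dt_alt[OF fin, of g] by simp
  finally show ?thesis .
qed

lemma Dt_mult:
  assumes "smooth_dfun f" "smooth_dfun g"
  shows "Dt i (\<lambda>p. f p * g p) p = Dt i f p * g p + f p * Dt i g p"
proof -
  let ?S = "deps f \<union> deps g"
  have fin: "finite ?S" using assms sm_fin by auto
  have "Dt i (\<lambda>p. f p * g p) p = pd (\<lambda>p. f p * g p) (X i) p + (\<Sum>c\<in>?S. wt i p c * pd (\<lambda>p. f p * g p) c p)"
    by (rule Dt_alt[OF fin deps_mult])
  also have "\<dots> = (pd f (X i) p + (\<Sum>c\<in>?S. wt i p c * pd f c p)) * g p + f p * (pd g (X i) p + (\<Sum>c\<in>?S. wt i p c * pd g c p))"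
    using pd_mult[OF sm_dif[OF assms(1)] sm_dif[OF assms(2)]]
    by (simp add: sum.distrib distrib_left distrib_right sum_distrib_left sum_distrib_right algebra_simps)
  also have "\<dots> = Dt i f p * g p + f p * Dt i g p"
    using Dt_alt[OF fin, of f] Dt_alt[OF fin, of g] by simp
  finally show ?thesis .
qed

lemma Dt_const: "Dt i (\<lambda>p. k) p = 0"
  using Dt_alt[of "{}" "\<lambda>p. k" i p] by (simp add: pd_const)

lemma Dt_cmult: "smooth_dfun f \<Longrightarrow> Dt i (\<lambda>p. k * f p) p = k * Dt i f p"
  using Dt_mult[OF sm_const, of f i k p] by (simp add: Dt_const)

lemma Dt_sum:
  assumes "finite A" "\<And>x. x \<in> A \<Longrightarrow> smooth_dfun (h x)"
  shows "Dt i (\<lambda>p. \<Sum>x\<in>A. h x p) p = (\<Sum>x\<in>A. Dt i (h x) p)"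
  using assms
proof (induction A arbitrary: p rule: finite_induct)
  case empty
  then show ?case by (simp add: Dt_const)
next
  case (insert a A)
  have "Dt i (\<lambda>p. \<Sum>x\<in>insert a A. h x p) p = Dt i (\<lambda>p. h a p + (\<Sum>x\<in>A. h x p)) p"
    using insert by simp
  also have "\<dots> = Dt i (h a) p + Dt i (\<lambda>p. \<Sum>x\<in>A. h x p) p"
    using insert by (intro Dt_add sm_sum) auto
  also have "\<dots> = Dt i (h a) p + (\<Sum>x\<in>A. Dt i (h x) p)"
    using insert by simp
  finally show ?case using insert by simp
qed

lemma Dt_coord: "Dt i (\<lambda>p. p e) p = (if e = X i then 1 else 0) + wt i p e"
proof -
  have "deps (\<lambda>p. p e) \<subseteq> {e}" unfolding deps_def by auto
  then show ?thesis using Dt_alt[of "{e}" "\<lambda>p. p e" i p] by (simp add: pd_coord)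
qed

lemma finite_change:
  assumes "finite S" "\<forall>c\<in>S. c \<notin> deps f"
  shows "f (\<lambda>c. if c \<in> S then r c else p c) = f p"
  using assms
proof (induction S rule: finite_induct)
  case empty then show ?case by simp
next
  case (insert s S)
  have "(\<lambda>c. if c \<in> insert s S then r c else p c) = (\<lambda>c. if c \<in> S then r c else p c)(s := r s)"
    by auto
  then show ?case using insert not_deps[of s f] by simp
qed

lemma locality:
  assumes "continuous_on UNIV f" "\<forall>c\<in>deps f. p c = p' c"
  shows "f p = f p'"
proof (rule ccontr)
  assume ne: "f p \<noteq> f p'"
  define e where "e = dist (f p) (f p')"
  have e: "e > 0" using ne by (simp add: e_def)
  have "open (f -` ball (f p') e)"
    by (rule open_vimage[OF open_ball assms(1)])
  then have "openin (product_topology (\<lambda>i. euclidean) UNIV) (f -` ball (f p') e)"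
    by (simp add: open_fun_def)
  moreover have "p' \<in> f -` ball (f p') e" using e by simp
  ultimately have "\<exists>X. p' \<in> (\<Pi>\<^sub>E i\<in>UNIV. X i) \<and> (\<forall>i. openin euclidean (X i)) \<and>
      finite {i. X i \<noteq> topspace euclidean} \<and> (\<Pi>\<^sub>E i\<in>UNIV. X i) \<subseteq> f -` ball (f p') e"
    by (rule product_topology_open_contains_basis)
  then obtain X where X: "p' \<in> (\<Pi>\<^sub>E i\<in>UNIV. X i)" "\<forall>i. openin euclidean (X i)"
      "finite {i. X i \<noteq> topspace euclidean}" "(\<Pi>\<^sub>E i\<in>UNIV. X i) \<subseteq> f -` ball (f p') e"
    by blast
  define S where "S = {i. X i \<noteq> UNIV}"
  have finS: "finite S" using X(3) by (simp add: S_def)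
  define q where "q = (\<lambda>c. if c \<in> S - deps f then p' c else p c)"
  have "q \<in> (\<Pi>\<^sub>E i\<in>UNIV. X i)"
  proof -
    have "q c \<in> X c" for c
    proof (cases "c \<in> S")
      case True
      then have "q c = p' c" using assms(2) by (auto simp: q_def)
      then show ?thesis using X(1) by auto
    next
      case False
      then show ?thesis by (auto simp: S_def)
    qed
    then show ?thesis by auto
  qed
  then have "f q \<in> ball (f p') e" using X(4) by auto
  moreover have "f q = f p"
    unfolding q_def by (rule finite_change) (use finS in auto)
  ultimately show False by (simp add: e_def dist_commute)
qed




lemma schwarz:
  assumes sm: "smooth_dfun f"
  shows "pd (pd f a) b p = pd (pd f b) a p"
proof (cases "a = b")
  case True then show ?thesis by simp
next
  case ab: False
  define q where "q = (\<lambda>s t. p(a := s, b := t))"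
  have qa: "(q s t)(a := x) = q x t" for s t x using ab by (simp add: q_def fun_upd_twist)
  have qb: "(q s t)(b := y) = q s y" for s t y by (simp add: q_def)
  have qp: "q (p a) (p b) = p" by (simp add: q_def)
  define fa where "fa = pd f a"
  define fb where "fb = pd f b"
  define fab where "fab = pd fa b"
  define fba where "fba = pd fb a"
  have smfa: "smooth_dfun fa" "smooth_dfun fb" "smooth_dfun fab" "smooth_dfun fba"
    using sm sm_pd by (auto simp: fa_def fb_def fab_def fba_def)
  have Dfa: "((\<lambda>x. f (q x t)) has_real_derivative fa (q s t)) (at s)" for s t
    using dif_deriv[OF sm_dif[OF sm], of "q 0 t" a s] by (simp add: qa fa_def)
  have Dfb: "((\<lambda>y. f (q s y)) has_real_derivative fb (q s t)) (at t)" for s t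
    using dif_deriv[OF sm_dif[OF sm], of "q s 0" b t] by (simp add: qb fb_def)
  have Dfab: "((\<lambda>y. fa (q s y)) has_real_derivative fab (q s t)) (at t)" for s t
    using dif_deriv[OF sm_dif[OF smfa(1)], of "q s 0" b t] by (simp add: qb fab_def)
  have Dfba: "((\<lambda>x. fb (q x t)) has_real_derivative fba (q s t)) (at s)" for s t
    using dif_deriv[OF sm_dif[OF smfa(2)], of "q 0 t" a s] by (simp add: qa fba_def)
  define x0 where "x0 = p a"
  define y0 where "y0 = p b"
  have key: "\<exists>s t s' t'. x0 < s \<and> s < x0 + h \<and> y0 < t \<and> t < y0 + h \<and>
                x0 < s' \<and> s' < x0 + h \<and> y0 < t' \<and> t' < y0 + h \<and> fab (q s t) = fba (q s' t')"
    if h: "h > 0" for h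
  proof -
    define \<Delta> where "\<Delta> = f (q (x0+h) (y0+h)) - f (q (x0+h) y0) - f (q x0 (y0+h)) + f (q x0 y0)"
    obtain s where s: "x0 < s" "s < x0 + h"
      "(f (q (x0+h) (y0+h)) - f (q (x0+h) y0)) - (f (q x0 (y0+h)) - f (q x0 y0))
         = (x0 + h - x0) * (fa (q s (y0+h)) - fa (q s y0))"
      using MVT2[of x0 "x0+h" "\<lambda>x. f (q x (y0+h)) - f (q x y0)" "\<lambda>x. fa (q x (y0+h)) - fa (q x y0)"]
        h DERIV_diff[OF Dfa Dfa] by auto
    obtain t where t: "y0 < t" "t < y0 + h"
      "fa (q s (y0+h)) - fa (q s y0) = (y0 + h - y0) * fab (q s t)"
      using MVT2[of y0 "y0+h" "\<lambda>y. fa (q s y)" "\<lambda>y. fab (q s y)"] h Dfab by auto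
    obtain t' where t': "y0 < t'" "t' < y0 + h"
      "(f (q (x0+h) (y0+h)) - f (q x0 (y0+h))) - (f (q (x0+h) y0) - f (q x0 y0))
         = (y0 + h - y0) * (fb (q (x0+h) t') - fb (q x0 t'))"
      using MVT2[of y0 "y0+h" "\<lambda>y. f (q (x0+h) y) - f (q x0 y)" "\<lambda>y. fb (q (x0+h) y) - fb (q x0 y)"]
        h DERIV_diff[OF Dfb Dfb] by auto
    obtain s' where s': "x0 < s'" "s' < x0 + h"
      "fb (q (x0+h) t') - fb (q x0 t') = (x0 + h - x0) * fba (q s' t')"
      using MVT2[of x0 "x0+h" "\<lambda>x. fb (q x t')" "\<lambda>x. fba (q x t')"] h Dfba by auto
    have "\<Delta> = h * (h * fab (q s t))" using s(3) t(3) by (simp add: \<Delta>_def)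
    moreover have "\<Delta> = h * (h * fba (q s' t'))" using s'(3) t'(3) by (simp add: \<Delta>_def algebra_simps)
    ultimately have "fab (q s t) = fba (q s' t')" using h by simp
    then show ?thesis using s t s' t' by blast
  qed
  have qc: "continuous_on UNIV (\<lambda>z::real\<times>real. q (fst z) (snd z))"
  proof (rule continuous_on_coordinatewise_then_product)
    fix c
    show "continuous_on UNIV (\<lambda>z::real\<times>real. q (fst z) (snd z) c)"
      by (cases "c = b"; cases "c = a") (auto simp: q_def intro!: continuous_intros)
  qed
  have c1: "continuous_on UNIV (\<lambda>z::real\<times>real. fab (q (fst z) (snd z)))"
    using continuous_on_compose[OF qc, of fab] continuous_on_subset[OF sm_cont[OF smfa(3)]] by (simp add: o_def)
  have c2: "continuous_on UNIV (\<lambda>z::real\<times>real. fba (q (fst z) (snd z)))"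
    using continuous_on_compose[OF qc, of fba] continuous_on_subset[OF sm_cont[OF smfa(4)]] by (simp add: o_def)
  show ?thesis
  proof (rule ccontr)
    assume ne: "pd (pd f a) b p \<noteq> pd (pd f b) a p"
    then have ne': "fab (q x0 y0) \<noteq> fba (q x0 y0)"
      by (simp add: fab_def fba_def fa_def fb_def x0_def y0_def qp)
    define e where "e = dist (fab (q x0 y0)) (fba (q x0 y0)) / 2"
    have e: "e > 0" using ne' by (simp add: e_def)
    obtain d1 where d1: "d1 > 0" "\<And>z. dist z (x0,y0) < d1 \<Longrightarrow> dist (fab (q (fst z) (snd z))) (fab (q x0 y0)) < e"
      using c1 e unfolding continuous_on_iff by (metis UNIV_I fst_conv snd_conv)
    obtain d2 where d2: "d2 > 0" "\<And>z. dist z (x0,y0) < d2 \<Longrightarrow> dist (fba (q (fst z) (snd z))) (fba (q x0 y0)) < e"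
      using c2 e unfolding continuous_on_iff by (metis UNIV_I fst_conv snd_conv)
    define h where "h = min d1 d2 / 4"
    have h: "h > 0" using d1 d2 by (simp add: h_def)
    obtain s t s' t' where st: "x0 < s" "s < x0 + h" "y0 < t" "t < y0 + h"
                "x0 < s'" "s' < x0 + h" "y0 < t'" "t' < y0 + h" "fab (q s t) = fba (q s' t')"
      using key[OF h] by blast
    have dd: "dist (u, v) (x0, y0) < min d1 d2" if "x0 < u" "u < x0 + h" "y0 < v" "v < y0 + h" for u v
    proof -
      have "dist (u, v) (x0, y0) \<le> \<bar>u - x0\<bar> + \<bar>v - y0\<bar>"
        unfolding dist_Pair_Pair dist_real_def using sqrt_sum_squares_le_sum_abs[of "\<bar>u - x0\<bar>" "\<bar>v - y0\<bar>"] by simp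
      also have "\<dots> < min d1 d2" using that d1(1) d2(1) unfolding h_def by (simp add: abs_if min_def split: if_splits)
      finally show ?thesis .
    qed
    have "dist (fab (q s t)) (fab (q x0 y0)) < e" using d1(2)[of "(s,t)"] dd[of s t] st by simp
    moreover have "dist (fba (q s' t')) (fba (q x0 y0)) < e" using d2(2)[of "(s',t')"] dd[of s' t'] st by simp
    ultimately have "dist (fab (q x0 y0)) (fba (q x0 y0)) < 2 * e"
      using st(9) dist_triangle[of "fab (q x0 y0)" "fba (q x0 y0)" "fab (q s t)"]
      by (simp add: dist_commute)
    then show False by (simp add: e_def)
  qed
qed


definition W2 :: "nat \<Rightarrow> nat \<Rightarrow> jet \<Rightarrow> jc \<Rightarrow> real" where
  "W2 i j p c = (if isX c then 0 else p (sh i (sh j c)))"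

lemma W2_sym: "W2 i j p c = W2 j i p c"
  by (cases c) (simp_all add: W2_def sh_def add_mset_commute)

lemma Dt_wt: "Dt i (\<lambda>q. wt j q c) p = W2 i j p c"
proof (cases "isX c")
  case True
  then show ?thesis by (simp add: wt_def W2_def Dt_const)
next
  case False
  then have "\<not> isX (sh j c)" by (cases c) (auto simp: sh_def)
  then have "sh j c \<noteq> X i" by auto
  then show ?thesis using False \<open>\<not> isX (sh j c)\<close> by (simp add: wt_def W2_def Dt_coord)
qed

lemma Dt_Dt_expand:
  assumes sm: "smooth_dfun f"
  shows "Dt i (Dt j f) p =
     pd (pd f (X j)) (X i) p + (\<Sum>d\<in>deps f. wt i p d * pd (pd f (X j)) d p)
   + (\<Sum>c\<in>deps f. W2 i j p c * pd f c p)
   + (\<Sum>c\<in>deps f. wt j p c * pd (pd f c) (X i) p)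
   + (\<Sum>c\<in>deps f. \<Sum>d\<in>deps f. wt j p c * wt i p d * pd (pd f c) d p)"
proof -
  let ?D = "deps f"
  have fin: "finite ?D" using sm sm_fin by blast
  have smt1: "smooth_dfun (\<lambda>q. wt j q c * pd f c q)" for c
    by (rule sm_mult[OF sm_wt sm_pd[OF sm]])
  have e1: "Dt j f = (\<lambda>q. pd f (X j) q + (\<Sum>c\<in>?D. wt j q c * pd f c q))"
    by (rule Dt_fun[OF fin])
  have "Dt i (Dt j f) p = Dt i (pd f (X j)) p + Dt i (\<lambda>q. \<Sum>c\<in>?D. wt j q c * pd f c q) p"
    unfolding e1 by (rule Dt_add[OF sm_pd[OF sm] sm_sum[OF fin smt1]])
  also have "Dt i (\<lambda>q. \<Sum>c\<in>?D. wt j q c * pd f c q) p = (\<Sum>c\<in>?D. Dt i (\<lambda>q. wt j q c * pd f c q) p)"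
    by (rule Dt_sum[OF fin smt1])
  also have "\<dots> = (\<Sum>c\<in>?D. W2 i j p c * pd f c p + wt j p c * Dt i (pd f c) p)"
    by (rule sum.cong) (simp_all add: Dt_mult[OF sm_wt sm_pd[OF sm]] Dt_wt)
  also have "\<dots> = (\<Sum>c\<in>?D. W2 i j p c * pd f c p + wt j p c * (pd (pd f c) (X i) p + (\<Sum>d\<in>?D. wt i p d * pd (pd f c) d p)))"
    by (rule sum.cong) (simp_all add: Dt_alt[OF fin deps_pd])
  also have "Dt i (pd f (X j)) p = pd (pd f (X j)) (X i) p + (\<Sum>d\<in>?D. wt i p d * pd (pd f (X j)) d p)"
    by (rule Dt_alt[OF fin deps_pd])
  finally show ?thesis
    by (simp add: sum.distrib distrib_left sum_distrib_left algebra_simps)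
qed

lemma Dt_comm:
  assumes sm: "smooth_dfun f"
  shows "Dt i (Dt j f) = Dt j (Dt i f)"
proof
  fix p
  let ?D = "deps f"
  have s1: "pd (pd f (X j)) (X i) p = pd (pd f (X i)) (X j) p" by (rule schwarz[OF sm])
  have s2: "(\<Sum>d\<in>?D. wt i p d * pd (pd f (X j)) d p) = (\<Sum>c\<in>?D. wt i p c * pd (pd f c) (X j) p)"
    by (rule sum.cong) (simp_all add: schwarz[OF sm])
  have s3: "(\<Sum>c\<in>?D. wt j p c * pd (pd f c) (X i) p) = (\<Sum>d\<in>?D. wt j p d * pd (pd f (X i)) d p)"
    by (rule sum.cong) (simp_all add: schwarz[OF sm])
  have s4: "(\<Sum>c\<in>?D. \<Sum>d\<in>?D. wt j p c * wt i p d * pd (pd f c) d p)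
          = (\<Sum>c\<in>?D. \<Sum>d\<in>?D. wt i p c * wt j p d * pd (pd f c) d p)"
  proof -
    have "(\<Sum>c\<in>?D. \<Sum>d\<in>?D. wt j p c * wt i p d * pd (pd f c) d p)
        = (\<Sum>d\<in>?D. \<Sum>c\<in>?D. wt j p c * wt i p d * pd (pd f c) d p)"
      by (rule sum.swap)
    also have "\<dots> = (\<Sum>d\<in>?D. \<Sum>c\<in>?D. wt i p d * wt j p c * pd (pd f d) c p)"
      by (intro sum.cong refl) (simp add: schwarz[OF sm])
    finally show ?thesis .
  qed
  have s5: "(\<Sum>c\<in>?D. W2 i j p c * pd f c p) = (\<Sum>c\<in>?D. W2 j i p c * pd f c p)"
    using W2_sym by simp
  show "Dt i (Dt j f) p = Dt j (Dt i f) p"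
    unfolding Dt_Dt_expand[OF sm] using s1 s2 s3 s4 s5 by simp
qed

lemma Dl_insort: "smooth_dfun f \<Longrightarrow> Dl (insort x L) f = Dt x (Dl L f)"
proof (induction L)
  case Nil then show ?case by (simp add: Dl_def)
next
  case (Cons y L)
  show ?case
  proof (cases "x \<le> y")
    case True then show ?thesis by (simp add: Dl_def)
  next
    case False
    then have "Dl (insort x (y # L)) f = Dt y (Dt x (Dl L f))"
      using Cons by (simp add: Dl_Cons)
    also have "\<dots> = Dt x (Dt y (Dl L f))" by (rule Dt_comm[OF sm_Dl[OF Cons.prems]])
    finally show ?thesis by (simp add: Dl_Cons)
  qed
qed

lemma Dl_sort: "smooth_dfun f \<Longrightarrow> Dl (sort L) f = Dl L f"
  by (induction L) (simp_all add: Dl_insort Dl_Cons)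

lemma Dl_perm: "smooth_dfun f \<Longrightarrow> mset I = mset J \<Longrightarrow> Dl I f = Dl J f"
proof -
  assume sm: "smooth_dfun f" and m: "mset I = mset J"
  have "sort I = sort J"
    using m by (metis sorted_list_of_multiset_mset)
  then show ?thesis using Dl_sort[OF sm, of I] Dl_sort[OF sm, of J] by simp
qed




fun isV :: "jc \<Rightarrow> bool" where
  "isV (X j) = False" | "isV (U \<alpha> I) = False" | "isV (V a I) = True"

definition noV :: "dfun \<Rightarrow> bool" where
  "noV f \<longleftrightarrow> (\<forall>c\<in>deps f. \<not> isV c)"

definition sig :: "(nat \<Rightarrow> dfun) \<Rightarrow> jet \<Rightarrow> jet" where
  "sig Q p = (\<lambda>c. case c of
       V a I \<Rightarrow> Dl (sorted_list_of_multiset I) (Q a) p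
     | _ \<Rightarrow> p c)"

lemma subst_sig: "subst_v Q f p = f (sig Q p)"
  unfolding subst_v_def sig_def ..

lemma sig_nonV: "\<not> isV c \<Longrightarrow> sig Q p c = p c"
  by (cases c) (simp_all add: sig_def)

lemma sig_V: "sig Q p (V a I) = Dl (sorted_list_of_multiset I) (Q a) p"
  by (simp add: sig_def)

lemma noV_local: "smooth_dfun g \<Longrightarrow> noV g \<Longrightarrow> g (sig Q p) = g p"
  by (rule sym, rule locality[OF sm_cont]) (auto simp: noV_def sig_nonV)

lemma deps_sum: "finite A \<Longrightarrow> deps (\<lambda>p. \<Sum>x\<in>A. h x p) \<subseteq> (\<Union>x\<in>A. deps (h x))"
proof (induction A rule: finite_induct)
  case empty then show ?case by simp
next
  case (insert a A)
  have "deps (\<lambda>p. \<Sum>x\<in>insert a A. h x p) = deps (\<lambda>p. h a p + (\<Sum>x\<in>A. h x p))"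
    using insert by simp
  also have "\<dots> \<subseteq> deps (h a) \<union> deps (\<lambda>p. \<Sum>x\<in>A. h x p)" by (rule deps_add)
  finally show ?case using insert by auto
qed

lemma noV_add: "noV f \<Longrightarrow> noV g \<Longrightarrow> noV (\<lambda>p. f p + g p)"
  using deps_add[of f g] unfolding noV_def by blast
lemma noV_mult: "noV f \<Longrightarrow> noV g \<Longrightarrow> noV (\<lambda>p. f p * g p)"
  using deps_mult[of f g] unfolding noV_def by blast
lemma noV_const: "noV (\<lambda>p. k)"
  unfolding noV_def by simp
lemma noV_pd: "noV f \<Longrightarrow> noV (pd f c)"
  using deps_pd[of f c] unfolding noV_def by blast
lemma noV_sum: "finite A \<Longrightarrow> (\<And>x. x \<in> A \<Longrightarrow> noV (h x)) \<Longrightarrow> noV (\<lambda>p. \<Sum>x\<in>A. h x p)"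
  using deps_sum[of A h] unfolding noV_def by blast

lemma noV_wt: "\<not> isV c \<Longrightarrow> noV (\<lambda>p. wt i p c)"
proof (cases "isX c")
  case True
  then show ?thesis by (simp add: wt_def noV_const)
next
  case False
  assume nv: "\<not> isV c"
  have "deps (\<lambda>p. p (sh i c)) \<subseteq> {sh i c}" unfolding deps_def by auto
  moreover have "\<not> isV (sh i c)" using nv by (cases c) (auto simp: sh_def)
  ultimately show ?thesis using False by (auto simp: wt_def noV_def)
qed

lemma noV_Dt: "smooth_dfun f \<Longrightarrow> noV f \<Longrightarrow> noV (Dt i f)"
  apply (subst Dt_fun, erule sm_fin)
  apply (rule noV_add)
   apply (erule noV_pd)
  apply (rule noV_sum)
   apply (erule sm_fin)
  apply (rule noV_mult)
   apply (rule noV_wt)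
   apply (auto simp: noV_def)[1]
  apply (erule noV_pd)
  done

lemma noV_Dl: "smooth_dfun f \<Longrightarrow> noV f \<Longrightarrow> noV (Dl I f)"
  by (induction I) (simp_all add: Dl_Cons noV_Dt sm_Dl)

definition lin :: "(nat \<times> nat multiset \<times> dfun) list \<Rightarrow> dfun" where
  "lin L q = sum_list (map (\<lambda>(a,I,g). q (V a I) * g q) L)"

definition linQ :: "(nat \<Rightarrow> dfun) \<Rightarrow> (nat \<times> nat multiset \<times> dfun) list \<Rightarrow> dfun" where
  "linQ Q L q = sum_list (map (\<lambda>(a,I,g). Dl (sorted_list_of_multiset I) (Q a) q * g q) L)"

definition dtL :: "nat \<Rightarrow> (nat \<times> nat multiset \<times> dfun) list \<Rightarrow> (nat \<times> nat multiset \<times> dfun) list" where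
  "dtL i L = concat (map (\<lambda>(a,I,g). [(a, add_mset i I, g), (a, I, Dt i g)]) L)"

definition good :: "(nat \<Rightarrow> dfun) \<Rightarrow> (nat \<times> nat multiset \<times> dfun) list \<Rightarrow> bool" where
  "good Q L \<longleftrightarrow> (\<forall>(a,I,g)\<in>set L. smooth_dfun (Q a) \<and> smooth_dfun g \<and> noV g)"

lemma lin_simps: "lin [] = (\<lambda>q. 0)" "lin ((a,I,g)#L) = (\<lambda>q. q (V a I) * g q + lin L q)"
  by (auto simp: lin_def)
lemma linQ_simps: "linQ Q [] = (\<lambda>q. 0)"
  "linQ Q ((a,I,g)#L) = (\<lambda>q. Dl (sorted_list_of_multiset I) (Q a) q * g q + linQ Q L q)"
  by (auto simp: linQ_def)
lemma dtL_simps: "dtL i [] = []" "dtL i ((a,I,g)#L) = (a, add_mset i I, g) # (a, I, Dt i g) # dtL i L"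
  by (auto simp: dtL_def)
lemma good_simps: "good Q []" "good Q ((a,I,g)#L) \<longleftrightarrow> smooth_dfun (Q a) \<and> smooth_dfun g \<and> noV g \<and> good Q L"
  by (auto simp: good_def)

lemma sm_lin: "good Q L \<Longrightarrow> smooth_dfun (lin L)"
proof (induction L)
  case Nil then show ?case by (simp add: lin_simps sm_const)
next
  case (Cons x L)
  obtain a I g where x: "x = (a,I,g)" by (cases x) auto
  show ?case using Cons by (simp add: x lin_simps good_simps sm_add sm_mult sm_coord)
qed

lemma sm_linQ: "good Q L \<Longrightarrow> smooth_dfun (linQ Q L)"
proof (induction L)
  case Nil then show ?case by (simp add: linQ_simps sm_const)
next
  case (Cons x L)
  obtain a I g where x: "x = (a,I,g)" by (cases x) auto
  show ?case using Cons by (simp add: x linQ_simps good_simps sm_add sm_mult sm_Dl)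
qed

lemma good_dtL: "good Q L \<Longrightarrow> good Q (dtL i L)"
proof (induction L)
  case Nil then show ?case by (simp add: dtL_simps good_simps)
next
  case (Cons x L)
  obtain a I g where x: "x = (a,I,g)" by (cases x) auto
  show ?case using Cons by (simp add: x dtL_simps good_simps sm_Dt noV_Dt)
qed

lemma Dt_lin: "good Q L \<Longrightarrow> Dt i (lin L) = lin (dtL i L)"
proof (induction L)
  case Nil then show ?case by (simp add: lin_simps dtL_simps Dt_const)
next
  case (Cons x L)
  obtain a I g where x: "x = (a,I,g)" by (cases x) auto
  have gd: "smooth_dfun g" "good Q L" using Cons.prems by (simp_all add: x good_simps)
  show ?case
  proof
    fix p
    have "Dt i (lin (x#L)) p = Dt i (\<lambda>q. q (V a I) * g q) p + Dt i (lin L) p"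
      unfolding x lin_simps by (rule Dt_add[OF sm_mult[OF sm_coord gd(1)] sm_lin[OF gd(2)]])
    also have "\<dots> = p (V a (add_mset i I)) * g p + p (V a I) * Dt i g p + lin (dtL i L) p"
      using Cons.IH[OF gd(2)] by (simp add: Dt_mult[OF sm_coord gd(1)] Dt_coord wt_def sh_def)
    also have "\<dots> = lin (dtL i (x#L)) p"
      by (simp add: x dtL_simps lin_simps)
    finally show "Dt i (lin (x#L)) p = lin (dtL i (x#L)) p" .
  qed
qed

lemma Dt_linQ: "good Q L \<Longrightarrow> Dt i (linQ Q L) = linQ Q (dtL i L)"
proof (induction L)
  case Nil then show ?case by (simp add: linQ_simps dtL_simps Dt_const)
next
  case (Cons x L)
  obtain a I g where x: "x = (a,I,g)" by (cases x) auto
  have gd: "smooth_dfun g" "good Q L" "smooth_dfun (Q a)" using Cons.prems by (simp_all add: x good_simps)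
  have so: "Dt i (Dl (sorted_list_of_multiset I) (Q a)) = Dl (sorted_list_of_multiset (add_mset i I)) (Q a)"
    unfolding Dl_Cons[symmetric] by (rule Dl_perm[OF gd(3)]) simp
  show ?case
  proof
    fix p
    have "Dt i (linQ Q (x#L)) p = Dt i (\<lambda>q. Dl (sorted_list_of_multiset I) (Q a) q * g q) p + Dt i (linQ Q L) p"
      unfolding x linQ_simps by (rule Dt_add[OF sm_mult[OF sm_Dl[OF gd(3)] gd(1)] sm_linQ[OF gd(2)]])
    also have "\<dots> = Dl (sorted_list_of_multiset (add_mset i I)) (Q a) p * g p
         + Dl (sorted_list_of_multiset I) (Q a) p * Dt i g p + linQ Q (dtL i L) p"
      using Cons.IH[OF gd(2)] by (simp add: Dt_mult[OF sm_Dl[OF gd(3)] gd(1)] so)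
    also have "\<dots> = linQ Q (dtL i (x#L)) p"
      by (simp add: x dtL_simps linQ_simps)
    finally show "Dt i (linQ Q (x#L)) p = linQ Q (dtL i (x#L)) p" .
  qed
qed

lemma lin_sig: "good Q L \<Longrightarrow> lin L (sig Q p) = linQ Q L p"
proof (induction L)
  case Nil then show ?case by (simp add: lin_simps linQ_simps)
next
  case (Cons x L)
  obtain a I g where x: "x = (a,I,g)" by (cases x) auto
  have gd: "smooth_dfun g" "good Q L" "noV g" using Cons.prems by (simp_all add: x good_simps)
  show ?case using Cons.IH[OF gd(2)] noV_local[OF gd(1) gd(3)]
    by (simp add: x lin_simps linQ_simps sig_V)
qed

lemma Dl_lin_sig:
  assumes "good Q L"
  shows "Dl K (lin L) (sig Q p) = Dl K (linQ Q L) p"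
proof -
  have "Dl K (lin L) = lin (foldr (dtL) K L) \<and> Dl K (linQ Q L) = linQ Q (foldr dtL K L) \<and> good Q (foldr dtL K L)"
  proof (induction K)
    case Nil then show ?case using assms by simp
  next
    case (Cons i K)
    then have g: "good Q (foldr dtL K L)" by blast
    show ?case using Cons Dt_lin[OF g, of i] Dt_linQ[OF g, of i] good_dtL[OF g, of i]
      by (simp add: Dl_Cons)
  qed
  then show ?thesis using lin_sig by simp
qed




lemma fin_mis: "finite (mis n k)"
  unfolding mis_def by (rule finite_lists_length_eq) simp

lemma mis_0: "mis n 0 = {[]}"
  unfolding mis_def by auto

lemma sum_cons_mis:
  "(\<Sum>i<n. \<Sum>J\<in>mis n j. g (i # J)) = (\<Sum>J\<in>mis n (Suc j). (g J :: real))"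
proof -
  have img: "mis n (Suc j) = (\<lambda>(i,J). i # J) ` ({..<n} \<times> mis n j)"
  proof
    show "mis n (Suc j) \<subseteq> (\<lambda>(i,J). i # J) ` ({..<n} \<times> mis n j)"
    proof
      fix L assume "L \<in> mis n (Suc j)"
      then obtain i J where "L = i # J" "i < n" "J \<in> mis n j"
        unfolding mis_def by (cases L) auto
      then show "L \<in> (\<lambda>(i,J). i # J) ` ({..<n} \<times> mis n j)" by force
    qed
    show "(\<lambda>(i,J). i # J) ` ({..<n} \<times> mis n j) \<subseteq> mis n (Suc j)"
      unfolding mis_def by auto
  qed
  have inj: "inj_on (\<lambda>(i,J). i # J) ({..<n} \<times> mis n j)"
    by (auto simp: inj_on_def)
  have "(\<Sum>J\<in>mis n (Suc j). g J) = (\<Sum>x\<in>{..<n} \<times> mis n j. g ((\<lambda>(i,J). i # J) x))"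
    unfolding img by (rule sum.reindex[OF inj, unfolded o_def])
  also have "\<dots> = (\<Sum>i<n. \<Sum>J\<in>mis n j. g (i # J))"
    by (simp add: sum.cartesian_product split_def)
  finally show ?thesis by simp
qed

definition TT :: "nat \<Rightarrow> nat \<Rightarrow> (nat list \<times> nat list) set" where
  "TT n k = {(J, K). set J \<subseteq> {..<n} \<and> set K \<subseteq> {..<n} \<and> length J + length K = k - 1}"

lemma sum_TT:
  assumes "k \<ge> 1"
  shows "(\<Sum>JK\<in>TT n k. g JK) = (\<Sum>j<k. \<Sum>J\<in>mis n j. \<Sum>K\<in>mis n (k - 1 - j). (g (J, K) :: real))"
proof -
  have eq: "TT n k = (\<Union>j\<in>{..<k}. mis n j \<times> mis n (k - 1 - j))"
    unfolding TT_def mis_def using assms by auto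
  have "(\<Sum>JK\<in>TT n k. g JK) = (\<Sum>j<k. \<Sum>JK\<in>mis n j \<times> mis n (k - 1 - j). g JK)"
    unfolding eq
    apply (rule sum.UNION_disjoint)
      apply simp
     apply (simp add: fin_mis)
    apply (auto simp: mis_def)
    done
  also have "\<dots> = (\<Sum>j<k. \<Sum>J\<in>mis n j. \<Sum>K\<in>mis n (k - 1 - j). g (J, K))"
    by (simp add: sum.cartesian_product split_def)
  finally show ?thesis .
qed

lemma fin_TT: "finite (TT n k)"
proof -
  have "TT n k \<subseteq> (\<Union>j\<in>{..k}. mis n j) \<times> (\<Union>j\<in>{..k}. mis n j)"
    unfolding TT_def mis_def by auto
  then show ?thesis by (rule finite_subset) (simp add: fin_mis)
qed

lemma telescope:
  fixes w :: dfun and B :: "nat list \<Rightarrow> dfun"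
  assumes smw: "smooth_dfun w" and smB: "\<And>I. smooth_dfun (B I)"
    and symB: "\<And>I I'. mset I = mset I' \<Longrightarrow> B I = B I'"
    and k: "k \<ge> 1"
  shows "(\<Sum>i<n. \<Sum>JK\<in>TT n k. (-1) ^ length (snd JK) *
            Dt i (\<lambda>q. Dl (fst JK) w q * Dl (snd JK) (B (fst JK @ snd JK @ [i])) q) p)
       = (\<Sum>I\<in>mis n k. Dl I w p * B I p - (-1) ^ k * (w p * Dl I (B I) p))"
proof -
  define W where "W J K = Dl J w p * Dl K (B (J @ K)) p" for J K
  define S where "S j = (\<Sum>J\<in>mis n j. \<Sum>K\<in>mis n (k - j). (-1) ^ (k - j) * W J K)" for j
  have Dtm: "Dt i (\<lambda>q. Dl J w q * Dl K (B (J @ K @ [i])) q) p = W (i # J) K + W J (i # K)" for i J K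
  proof -
    have b1: "B (J @ K @ [i]) = B ((i # J) @ K)" by (rule symB) simp
    have b2: "B (J @ K @ [i]) = B (J @ (i # K))" by (rule symB) simp
    show ?thesis
      unfolding Dt_mult[OF sm_Dl[OF smw] sm_Dl[OF smB]] W_def
      by (simp add: Dl_Cons[symmetric] b1 b2[symmetric])
  qed
  have "(\<Sum>i<n. \<Sum>JK\<in>TT n k. (-1) ^ length (snd JK) *
            Dt i (\<lambda>q. Dl (fst JK) w q * Dl (snd JK) (B (fst JK @ snd JK @ [i])) q) p)
      = (\<Sum>i<n. \<Sum>j<k. \<Sum>J\<in>mis n j. \<Sum>K\<in>mis n (k - 1 - j). (-1) ^ (k - 1 - j) * (W (i # J) K + W J (i # K)))"
  proof (rule sum.cong[OF refl])
    fix i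
    have "(\<Sum>JK\<in>TT n k. (-1) ^ length (snd JK) *
            Dt i (\<lambda>q. Dl (fst JK) w q * Dl (snd JK) (B (fst JK @ snd JK @ [i])) q) p)
        = (\<Sum>j<k. \<Sum>J\<in>mis n j. \<Sum>K\<in>mis n (k - 1 - j). (-1) ^ length K *
            Dt i (\<lambda>q. Dl J w q * Dl K (B (J @ K @ [i])) q) p)"
      using sum_TT[OF k, where n=n and g="\<lambda>JK. (-1) ^ length (snd JK) *
            Dt i (\<lambda>q. Dl (fst JK) w q * Dl (snd JK) (B (fst JK @ snd JK @ [i])) q) p"] by simp
    also have "\<dots> = (\<Sum>j<k. \<Sum>J\<in>mis n j. \<Sum>K\<in>mis n (k - 1 - j). (-1) ^ (k - 1 - j) * (W (i # J) K + W J (i # K)))"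
      by (intro sum.cong refl) (simp add: Dtm mis_def)
    finally show "(\<Sum>JK\<in>TT n k. (-1) ^ length (snd JK) *
            Dt i (\<lambda>q. Dl (fst JK) w q * Dl (snd JK) (B (fst JK @ snd JK @ [i])) q) p)
        = (\<Sum>j<k. \<Sum>J\<in>mis n j. \<Sum>K\<in>mis n (k - 1 - j). (-1) ^ (k - 1 - j) * (W (i # J) K + W J (i # K)))" .
  qed
  also have "\<dots> = (\<Sum>j<k. (\<Sum>i<n. \<Sum>J\<in>mis n j. \<Sum>K\<in>mis n (k - 1 - j). (-1) ^ (k - 1 - j) * W (i # J) K)
                     + (\<Sum>J\<in>mis n j. \<Sum>i<n. \<Sum>K\<in>mis n (k - 1 - j). (-1) ^ (k - 1 - j) * W J (i # K)))"
  proof -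
    have "(\<Sum>i<n. \<Sum>j<k. \<Sum>J\<in>mis n j. \<Sum>K\<in>mis n (k - 1 - j). (-1) ^ (k - 1 - j) * (W (i # J) K + W J (i # K)))
        = (\<Sum>j<k. \<Sum>i<n. \<Sum>J\<in>mis n j. \<Sum>K\<in>mis n (k - 1 - j). (-1) ^ (k - 1 - j) * (W (i # J) K + W J (i # K)))"
      by (rule sum.swap)
    also have "\<dots> = (\<Sum>j<k. (\<Sum>i<n. \<Sum>J\<in>mis n j. \<Sum>K\<in>mis n (k - 1 - j). (-1) ^ (k - 1 - j) * W (i # J) K)
                     + (\<Sum>i<n. \<Sum>J\<in>mis n j. \<Sum>K\<in>mis n (k - 1 - j). (-1) ^ (k - 1 - j) * W J (i # K)))"
      by (simp add: distrib_left sum.distrib)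
    also have "\<dots> = (\<Sum>j<k. (\<Sum>i<n. \<Sum>J\<in>mis n j. \<Sum>K\<in>mis n (k - 1 - j). (-1) ^ (k - 1 - j) * W (i # J) K)
                     + (\<Sum>J\<in>mis n j. \<Sum>i<n. \<Sum>K\<in>mis n (k - 1 - j). (-1) ^ (k - 1 - j) * W J (i # K)))"
      by (simp add: sum.swap[of _ "{..<n}"])
    finally show ?thesis .
  qed
  also have "\<dots> = (\<Sum>j<k. S (Suc j) - S j)"
  proof (rule sum.cong[OF refl])
    fix j assume j: "j \<in> {..<k}"
    have e1: "k - Suc j = k - 1 - j" by simp
    have e2: "k - j = Suc (k - 1 - j)" using j by auto
    have a: "(\<Sum>i<n. \<Sum>J\<in>mis n j. \<Sum>K\<in>mis n (k - 1 - j). (-1) ^ (k - 1 - j) * W (i # J) K) = S (Suc j)"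
      unfolding S_def e1 by (rule sum_cons_mis[where n=n and j=j and g="\<lambda>J. \<Sum>K\<in>mis n (k - 1 - j). (-1) ^ (k - 1 - j) * W J K"])
    have b: "(\<Sum>J\<in>mis n j. \<Sum>i<n. \<Sum>K\<in>mis n (k - 1 - j). (-1) ^ (k - 1 - j) * W J (i # K)) = - S j"
    proof -
      have "(\<Sum>J\<in>mis n j. \<Sum>i<n. \<Sum>K\<in>mis n (k - 1 - j). (-1) ^ (k - 1 - j) * W J (i # K))
          = (\<Sum>J\<in>mis n j. \<Sum>K\<in>mis n (k - j). (-1) ^ (k - 1 - j) * W J K)"
        unfolding e2 by (intro sum.cong refl sum_cons_mis)
      also have "\<dots> = (\<Sum>J\<in>mis n j. \<Sum>K\<in>mis n (k - j). - ((-1) ^ (k - j) * W J K))"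
        unfolding e2 by simp
      also have "\<dots> = - S j" by (simp add: S_def sum_negf)
      finally show ?thesis .
    qed
    show "(\<Sum>i<n. \<Sum>J\<in>mis n j. \<Sum>K\<in>mis n (k - 1 - j). (-1) ^ (k - 1 - j) * W (i # J) K)
        + (\<Sum>J\<in>mis n j. \<Sum>i<n. \<Sum>K\<in>mis n (k - 1 - j). (-1) ^ (k - 1 - j) * W J (i # K))
        = S (Suc j) - S j" using a b by simp
  qed
  also have "\<dots> = S k - S 0" by (rule sum_lessThan_telescope)
  also have "\<dots> = (\<Sum>I\<in>mis n k. Dl I w p * B I p - (-1) ^ k * (w p * Dl I (B I) p))"
    by (simp add: S_def W_def mis_0 sum_subtractf)
  finally show ?thesis .
qed




lemma dU_eq: "dU f \<alpha> I = (\<lambda>p. (1 / real (card {J. mset J = mset I})) * pd f (U \<alpha> (mset I)) p)"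
  by (rule ext) (simp add: dU_def)

lemma sm_dU: "smooth_dfun f \<Longrightarrow> smooth_dfun (dU f \<alpha> I)"
  unfolding dU_eq by (rule sm_cmult[OF sm_pd])

lemma noV_dU: "noV f \<Longrightarrow> noV (dU f \<alpha> I)"
  unfolding dU_eq by (rule noV_mult[OF noV_const noV_pd])

lemma dU_sym: "mset I = mset I' \<Longrightarrow> dU f \<alpha> I = dU f \<alpha> I'"
  by (simp add: dU_def fun_eq_iff)

lemma Dt_sum3:
  assumes "finite A" "\<And>x. finite (B x)" "finite C"
    "\<And>x y z. x \<in> A \<Longrightarrow> y \<in> B x \<Longrightarrow> z \<in> C \<Longrightarrow> smooth_dfun (h x y z)"
  shows "Dt i (\<lambda>p. \<Sum>x\<in>A. \<Sum>y\<in>B x. \<Sum>z\<in>C. h x y z p) p = (\<Sum>x\<in>A. \<Sum>y\<in>B x. \<Sum>z\<in>C. Dt i (h x y z) p)"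
proof -
  have s2: "smooth_dfun (\<lambda>p. \<Sum>z\<in>C. h x y z p)" if "x \<in> A" "y \<in> B x" for x y
    using assms that by (intro sm_sum) auto
  have s1: "smooth_dfun (\<lambda>p. \<Sum>y\<in>B x. \<Sum>z\<in>C. h x y z p)" if "x \<in> A" for x
    using assms that s2 by (intro sm_sum) auto
  have "Dt i (\<lambda>p. \<Sum>x\<in>A. \<Sum>y\<in>B x. \<Sum>z\<in>C. h x y z p) p = (\<Sum>x\<in>A. Dt i (\<lambda>p. \<Sum>y\<in>B x. \<Sum>z\<in>C. h x y z p) p)"
    using Dt_sum[OF assms(1), of "\<lambda>x p. \<Sum>y\<in>B x. \<Sum>z\<in>C. h x y z p"] s1 by blast
  also have "\<dots> = (\<Sum>x\<in>A. \<Sum>y\<in>B x. Dt i (\<lambda>p. \<Sum>z\<in>C. h x y z p) p)"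
    by (rule sum.cong[OF refl], rule Dt_sum[OF assms(2)]) (use s2 in auto)
  also have "\<dots> = (\<Sum>x\<in>A. \<Sum>y\<in>B x. \<Sum>z\<in>C. Dt i (h x y z) p)"
    by (intro sum.cong refl, rule Dt_sum[OF assms(3)]) (use assms(4) in auto)
  finally show ?thesis .
qed


theorem theorem2:
  fixes n m M N :: nat
    and F :: "nat \<Rightarrow> dfun" and P Q :: "nat \<Rightarrow> dfun"
  assumes F_smooth: "\<forall>a<M. smooth_dfun (F a)"
    and F_order: "\<forall>a<M. deps (F a) \<subseteq> {c. ucoord n m c \<and> jorder c \<le> N}"
    and P_smooth: "\<forall>\<alpha><m. smooth_dfun (P \<alpha>) \<and> deps (P \<alpha>) \<subseteq> {c. ucoord n m c}"
    and Q_smooth: "\<forall>a<M. smooth_dfun (Q a) \<and> deps (Q a) \<subseteq> {c. ucoord n m c}"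
    and adj_sym: "\<forall>\<alpha><m. onE n M F (adjoint n M N Q F \<alpha>)"
    and sym: "\<forall>a<M. onE n M F (frechet n m N P F a)"
  shows "(\<forall>i<n. subst_v Q (Phi n m M N P F i) = Psi n m M N P Q F i)
    \<and> (\<forall>p. (\<Sum>a<M. Q a p * frechet n m N P F a p) - (\<Sum>\<alpha><m. P \<alpha> p * adjoint n M N Q F \<alpha> p)
            = (\<Sum>i<n. Dt i (Psi n m M N P Q F i) p))
    \<and> onE n M F (\<lambda>p. \<Sum>i<n. Dt i (Psi n m M N P Q F i) p)"
proof -
  have ucV: "ucoord n m c \<Longrightarrow> \<not> isV c" for c by (cases c) auto
  have smF: "smooth_dfun (F a)" if "a < M" for a
    using that F_smooth by blast
  have noVF: "noV (F a)" if "a < M" for a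
  proof -
    have "deps (F a) \<subseteq> {c. ucoord n m c \<and> jorder c \<le> N}" using that F_order by blast
    then show ?thesis unfolding noV_def using ucV by blast
  qed
  have smP: "smooth_dfun (P \<alpha>)" if "\<alpha> < m" for \<alpha>
    using that P_smooth by blast
  have noVP: "noV (P \<alpha>)" if "\<alpha> < m" for \<alpha>
  proof -
    have "deps (P \<alpha>) \<subseteq> {c. ucoord n m c}" using that P_smooth by blast
    then show ?thesis unfolding noV_def using ucV by blast
  qed
  have smQ: "smooth_dfun (Q a)" if "a < M" for a
    using that Q_smooth by auto
  define B where "B \<alpha> I = (\<lambda>q. \<Sum>a<M. Q a q * dU (F a) \<alpha> I q)" for \<alpha> I
  have smB: "smooth_dfun (B \<alpha> I)" for \<alpha> I
    unfolding B_def
  proof (rule sm_sum)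
    fix a assume "a \<in> {..<M}"
    then show "smooth_dfun (\<lambda>q. Q a q * dU (F a) \<alpha> I q)"
      by (intro sm_mult smQ sm_dU smF) auto
  qed simp
  have symB: "mset I = mset I' \<Longrightarrow> B \<alpha> I = B \<alpha> I'" for \<alpha> I I'
    unfolding B_def by (simp add: dU_sym[of I I'])

  have c1: "subst_v Q (Phi n m M N P F i) = Psi n m M N P Q F i" for i
  proof
    fix p
    have vl: "Dl K (\<lambda>q. \<Sum>a<M. vvar a q * dU (F a) \<alpha> I q) (sig Q p) = Dl K (B \<alpha> I) p" for K \<alpha> I
    proof -
      define L where "L = map (\<lambda>a. (a, {#}::nat multiset, dU (F a) \<alpha> I)) [0..<M]"
      have gd: "good Q L" unfolding L_def good_def
        by (auto intro!: smQ sm_dU smF noV_dU noVF)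
      have "lin L = (\<lambda>q. \<Sum>a<M. vvar a q * dU (F a) \<alpha> I q)"
        by (rule ext) (simp add: lin_def L_def vvar_def o_def sum_set_upt_conv_sum_list_nat[symmetric] atLeast0LessThan)
      moreover have "linQ Q L = B \<alpha> I"
        by (rule ext) (simp add: linQ_def L_def B_def o_def sum_set_upt_conv_sum_list_nat[symmetric] atLeast0LessThan)
      ultimately show ?thesis using Dl_lin_sig[OF gd, of K p] by simp
    qed
    show "subst_v Q (Phi n m M N P F i) p = Psi n m M N P Q F i p"
      unfolding subst_sig Phi_def Psi_def
    proof (intro sum.cong refl)
      fix k JK \<alpha> assume a: "\<alpha> \<in> {..<m}"
      show "(-1) ^ length (snd JK) * Dl (fst JK) (P \<alpha>) (sig Q p) *
            Dl (snd JK) (\<lambda>q. \<Sum>a<M. vvar a q * dU (F a) \<alpha> (fst JK @ snd JK @ [i]) q) (sig Q p)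
          = (-1) ^ length (snd JK) * Dl (fst JK) (P \<alpha>) p *
            Dl (snd JK) (\<lambda>q. \<Sum>a<M. Q a q * dU (F a) \<alpha> (fst JK @ snd JK @ [i]) q) p"
        using vl[of "snd JK" \<alpha> "fst JK @ snd JK @ [i]"]
          noV_local[OF sm_Dl[OF smP] noV_Dl[OF smP noVP], of \<alpha> "fst JK" Q p] a
        by (simp add: B_def)
    qed
  qed

  have c2: "(\<Sum>a<M. Q a p * frechet n m N P F a p) - (\<Sum>\<alpha><m. P \<alpha> p * adjoint n M N Q F \<alpha> p)
            = (\<Sum>i<n. Dt i (Psi n m M N P Q F i) p)" for p
  proof -
    define T where "T k \<alpha> = (\<Sum>I\<in>mis n k. Dl I (P \<alpha>) p * B \<alpha> I p - (-1) ^ k * (P \<alpha> p * Dl I (B \<alpha> I) p))" for k \<alpha>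
    have L1: "(\<Sum>a<M. Q a p * frechet n m N P F a p) = (\<Sum>k\<le>N. \<Sum>\<alpha><m. \<Sum>I\<in>mis n k. Dl I (P \<alpha>) p * B \<alpha> I p)"
    proof -
      have "(\<Sum>a<M. Q a p * frechet n m N P F a p)
          = (\<Sum>a<M. \<Sum>k\<le>N. \<Sum>I\<in>mis n k. \<Sum>\<alpha><m. Q a p * (Dl I (P \<alpha>) p * dU (F a) \<alpha> I p))"
        by (simp add: frechet_def sum_distrib_left)
      also have "\<dots> = (\<Sum>k\<le>N. \<Sum>a<M. \<Sum>I\<in>mis n k. \<Sum>\<alpha><m. Q a p * (Dl I (P \<alpha>) p * dU (F a) \<alpha> I p))"
        by (rule sum.swap)
      also have "\<dots> = (\<Sum>k\<le>N. \<Sum>I\<in>mis n k. \<Sum>a<M. \<Sum>\<alpha><m. Q a p * (Dl I (P \<alpha>) p * dU (F a) \<alpha> I p))"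
        by (intro sum.cong refl, rule sum.swap)
      also have "\<dots> = (\<Sum>k\<le>N. \<Sum>I\<in>mis n k. \<Sum>\<alpha><m. \<Sum>a<M. Q a p * (Dl I (P \<alpha>) p * dU (F a) \<alpha> I p))"
        by (rule sum.cong[OF refl], rule sum.cong[OF refl], rule sum.swap)
      also have "\<dots> = (\<Sum>k\<le>N. \<Sum>I\<in>mis n k. \<Sum>\<alpha><m. Dl I (P \<alpha>) p * B \<alpha> I p)"
        by (intro sum.cong refl) (simp add: B_def sum_distrib_left mult_ac)
      also have "\<dots> = (\<Sum>k\<le>N. \<Sum>\<alpha><m. \<Sum>I\<in>mis n k. Dl I (P \<alpha>) p * B \<alpha> I p)"
        by (intro sum.cong refl, rule sum.swap)
      finally show ?thesis .
    qed
    have L2: "(\<Sum>\<alpha><m. P \<alpha> p * adjoint n M N Q F \<alpha> p)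
        = (\<Sum>k\<le>N. \<Sum>\<alpha><m. \<Sum>I\<in>mis n k. (-1) ^ k * (P \<alpha> p * Dl I (B \<alpha> I) p))"
    proof -
      have "(\<Sum>\<alpha><m. P \<alpha> p * adjoint n M N Q F \<alpha> p)
          = (\<Sum>\<alpha><m. \<Sum>k\<le>N. \<Sum>I\<in>mis n k. (-1) ^ k * (P \<alpha> p * Dl I (B \<alpha> I) p))"
        by (simp add: adjoint_def B_def sum_distrib_left mult_ac)
      also have "\<dots> = (\<Sum>k\<le>N. \<Sum>\<alpha><m. \<Sum>I\<in>mis n k. (-1) ^ k * (P \<alpha> p * Dl I (B \<alpha> I) p))"
        by (rule sum.swap)
      finally show ?thesis .
    qed
    have LHS: "(\<Sum>a<M. Q a p * frechet n m N P F a p) - (\<Sum>\<alpha><m. P \<alpha> p * adjoint n M N Q F \<alpha> p)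
        = (\<Sum>k\<in>{1..N}. \<Sum>\<alpha><m. T k \<alpha>)"
    proof -
      have "(\<Sum>a<M. Q a p * frechet n m N P F a p) - (\<Sum>\<alpha><m. P \<alpha> p * adjoint n M N Q F \<alpha> p)
          = (\<Sum>k\<le>N. \<Sum>\<alpha><m. T k \<alpha>)"
        unfolding L1 L2 T_def by (simp add: sum_subtractf)
      also have "\<dots> = (\<Sum>k\<in>insert 0 {1..N}. \<Sum>\<alpha><m. T k \<alpha>)"
        by (rule sum.cong) auto
      also have "\<dots> = (\<Sum>k\<in>{1..N}. \<Sum>\<alpha><m. T k \<alpha>)"
        by (simp add: T_def mis_0)
      finally show ?thesis .
    qed
    have psi: "Psi n m M N P Q F i = (\<lambda>p. \<Sum>k\<in>{1..N}. \<Sum>JK\<in>TT n k. \<Sum>\<alpha><m.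
        (-1) ^ length (snd JK) * (Dl (fst JK) (P \<alpha>) p * Dl (snd JK) (B \<alpha> (fst JK @ snd JK @ [i])) p))" for i
      by (simp add: fun_eq_iff Psi_def TT_def B_def mult.assoc)
    have Dpsi: "Dt i (Psi n m M N P Q F i) p = (\<Sum>k\<in>{1..N}. \<Sum>JK\<in>TT n k. \<Sum>\<alpha><m.
        (-1) ^ length (snd JK) * Dt i (\<lambda>q. Dl (fst JK) (P \<alpha>) q * Dl (snd JK) (B \<alpha> (fst JK @ snd JK @ [i])) q) p)" for i
    proof -
      have "Dt i (Psi n m M N P Q F i) p = (\<Sum>k\<in>{1..N}. \<Sum>JK\<in>TT n k. \<Sum>\<alpha><m.
        Dt i (\<lambda>p. (-1) ^ length (snd JK) * (Dl (fst JK) (P \<alpha>) p * Dl (snd JK) (B \<alpha> (fst JK @ snd JK @ [i])) p)) p)"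
        unfolding psi
        by (rule Dt_sum3) (auto simp: fin_TT intro!: sm_cmult sm_mult sm_Dl smP smB)
      also have "\<dots> = (\<Sum>k\<in>{1..N}. \<Sum>JK\<in>TT n k. \<Sum>\<alpha><m.
        (-1) ^ length (snd JK) * Dt i (\<lambda>q. Dl (fst JK) (P \<alpha>) q * Dl (snd JK) (B \<alpha> (fst JK @ snd JK @ [i])) q) p)"
        by (intro sum.cong refl Dt_cmult) (auto intro!: sm_mult sm_Dl smP smB)
      finally show ?thesis .
    qed
    have "(\<Sum>i<n. Dt i (Psi n m M N P Q F i) p)
        = (\<Sum>i<n. \<Sum>k\<in>{1..N}. \<Sum>JK\<in>TT n k. \<Sum>\<alpha><m.
        (-1) ^ length (snd JK) * Dt i (\<lambda>q. Dl (fst JK) (P \<alpha>) q * Dl (snd JK) (B \<alpha> (fst JK @ snd JK @ [i])) q) p)"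
      using Dpsi by simp
    also have "\<dots> = (\<Sum>k\<in>{1..N}. \<Sum>i<n. \<Sum>JK\<in>TT n k. \<Sum>\<alpha><m.
        (-1) ^ length (snd JK) * Dt i (\<lambda>q. Dl (fst JK) (P \<alpha>) q * Dl (snd JK) (B \<alpha> (fst JK @ snd JK @ [i])) q) p)"
      by (rule sum.swap)
    also have "\<dots> = (\<Sum>k\<in>{1..N}. \<Sum>i<n. \<Sum>\<alpha><m. \<Sum>JK\<in>TT n k.
        (-1) ^ length (snd JK) * Dt i (\<lambda>q. Dl (fst JK) (P \<alpha>) q * Dl (snd JK) (B \<alpha> (fst JK @ snd JK @ [i])) q) p)"
      by (rule sum.cong[OF refl], rule sum.cong[OF refl], rule sum.swap)
    also have "\<dots> = (\<Sum>k\<in>{1..N}. \<Sum>\<alpha><m. \<Sum>i<n. \<Sum>JK\<in>TT n k.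
        (-1) ^ length (snd JK) * Dt i (\<lambda>q. Dl (fst JK) (P \<alpha>) q * Dl (snd JK) (B \<alpha> (fst JK @ snd JK @ [i])) q) p)"
      by (rule sum.cong[OF refl], rule sum.swap)
    also have "\<dots> = (\<Sum>k\<in>{1..N}. \<Sum>\<alpha><m. T k \<alpha>)"
    proof (intro sum.cong refl)
      fix k \<alpha> assume k: "k \<in> {1..N}" and a: "\<alpha> \<in> {..<m}"
      show "(\<Sum>i<n. \<Sum>JK\<in>TT n k.
        (-1) ^ length (snd JK) * Dt i (\<lambda>q. Dl (fst JK) (P \<alpha>) q * Dl (snd JK) (B \<alpha> (fst JK @ snd JK @ [i])) q) p)
        = T k \<alpha>"
        unfolding T_def
        by (rule telescope[OF smP smB symB]) (use k a in auto)
    qed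
    finally show ?thesis using LHS by simp
  qed

  have c3: "onE n M F (\<lambda>p. \<Sum>i<n. Dt i (Psi n m M N P Q F i) p)"
    unfolding onE_def
  proof (intro allI impI)
    fix p assume h: "\<forall>a<M. \<forall>I. set I \<subseteq> {..<n} \<longrightarrow> Dl I (F a) p = 0"
    have "frechet n m N P F a p = 0" if "a < M" for a
      using sym that h unfolding onE_def by blast
    moreover have "adjoint n M N Q F \<alpha> p = 0" if "\<alpha> < m" for \<alpha>
      using adj_sym that h unfolding onE_def by blast
    ultimately show "(\<Sum>i<n. Dt i (Psi n m M N P Q F i) p) = 0"
      using c2[of p] by simp
  qed
  show ?thesis using c1 c2 c3 by blast
qed


end
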